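(* Consider the measurement scenario with observables $\mathcal{X} = \{x_1, x_2, x_3\}$, contexts $\mathcal{M} = \{\{x_1, x_2\}, \{x_2, x_3\}, \{x_1, x_3\}\}$ and outcomes $\mathcal{O} = \{0,1\}$. Up to relabelling, the only strongly contextual (possibilistic) empirical model on this scenario is the one in which perfect correlation is observed on two of the contexts and perfect anti-correlation is observed on the remaining context; i.e. (up to relabelling) the supports are $\{(0,0),(1,1)\}$ on $\{x_1,x_2\}$ and on $\{x_2,x_3\}$, and $\{(0,1),(1,0)\}$ on $\{x_3,x_1\}$ (listing outcomes of $x_3$ then $x_1$).
   Context: An empirical model on a measurement scenario $\langle \mathcal{X}, \mathcal{M}, \mathcal{O}\rangle$ is a compatible family $\{D_C\}_{C\in\mathcal{M}}$ of distributions $D_C$ on $\mathcal{O}^C$ (marginals on overlaps of contexts agree). Its possibilistic collapse replaces each $D_C$ by its support $S_C = \{s \in \mathcal{O}^C : D_C(s) > 0\}$ (possible joint outcomes); a possibilistic empirical model is such a compatible family of nonempty supports. A local section $s \in S_C$ extends to a global section if there is an assignment $g : \mathcal{X} \to \mathcal{O}$ with $g|_C = s$ and $g|_{C'} \in S_{C'}$ for every $C' \in \mathcal{M}$. The model is strongly contextual if no local section (in any context) extends to a global section, equivalently there is no assignment $g:\mathcal{X}\to\mathcal{O}$ with $g|_C \in S_C$ for all $C \in \mathcal{M}$. Perfect correlation on a context $\{x_i,x_j\}$ means the support is $\{(0,0),(1,1)\}$; perfect anti-correlation means the support is $\{(0,1),(1,0)\}$. Relabelling means permuting observables and permuting the outcomes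 of individual observables. *)

theory Defs
  imports Main
begin

text \<open>Observables X = {x1,x2,x3}; outcomes O = {0,1} rendered as bool (False = 0, True = 1).\<close>
datatype obs = X1 | X2 | X3

text \<open>A section on a context C: a map from C to O, i.e. a partial function with domain exactly C.\<close>
type_synonym sect = "obs \<Rightarrow> bool option"

definition contexts :: "obs set set" where
  "contexts = {{X1, X2}, {X2, X3}, {X1, X3}}"

definition sections_on :: "obs set \<Rightarrow> sect set" where
  "sections_on C = {s. dom s = C}"

definition poss_model :: "(obs set \<Rightarrow> sect set) \<Rightarrow> bool" where
  "poss_model S \<longleftrightarrow>
     (\<forall>C\<in>contexts. S C \<subseteq> sections_on C \<and> S C \<noteq> {}) \<and>
     (\<forall>C\<in>contexts. \<forall>C'\<in>contexts.
        (\<lambda>s. s |` (C \<inter> C')) ` S C = (\<lambda>s. s |` (C \<inter> C')) ` S C')"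

definition strongly_contextual :: "(obs set \<Rightarrow> sect set) \<Rightarrow> bool" where
  "strongly_contextual S \<longleftrightarrow>
     \<not> (\<exists>g :: obs \<Rightarrow> bool. \<forall>C\<in>contexts. (Some \<circ> g) |` C \<in> S C)"

text \<open>A sect s on C becomes the sect on the image of C under sigma, sending sigma x to tau x (s x).\<close>
definition relabel_section :: "(obs \<Rightarrow> obs) \<Rightarrow> (obs \<Rightarrow> bool \<Rightarrow> bool) \<Rightarrow> sect \<Rightarrow> sect" where
  "relabel_section \<sigma> \<tau> s = (\<lambda>y. map_option (\<tau> (inv \<sigma> y)) (s (inv \<sigma> y)))"

definition relabel :: "(obs \<Rightarrow> obs) \<Rightarrow> (obs \<Rightarrow> bool \<Rightarrow> bool)
    \<Rightarrow> (obs set \<Rightarrow> sect set) \<Rightarrow> (obs set \<Rightarrow> sect set)" where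
  "relabel \<sigma> \<tau> S = (\<lambda>C. relabel_section \<sigma> \<tau> ` S (inv \<sigma> ` C))"

definition is_relabelling :: "(obs \<Rightarrow> obs) \<Rightarrow> (obs \<Rightarrow> bool \<Rightarrow> bool) \<Rightarrow> bool" where
  "is_relabelling \<sigma> \<tau> \<longleftrightarrow> bij \<sigma> \<and> (\<forall>x. bij (\<tau> x))"

definition PR_model :: "obs set \<Rightarrow> sect set" where
  "PR_model C =
     (if C = {X1, X2} then {[X1 \<mapsto> b, X2 \<mapsto> b] | b. True}
      else if C = {X2, X3} then {[X2 \<mapsto> b, X3 \<mapsto> b] | b. True}
      else if C = {X1, X3} then {[X3 \<mapsto> b, X1 \<mapsto> \<not> b] | b. True}
      else {})"

end

theory Submission
  imports Defs
begin

lemma ctx_iff: "C \<in> contexts \<longleftrightarrow> (\<exists>a b. a \<noteq> b \<and> C = {a,b})"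
  unfolding contexts_def
  apply (rule iffI)
   apply auto[1]
  apply (elim exE conjE)
  subgoal for a b by (cases a; cases b) (auto simp: insert_commute)
  done

lemma PR1: "PR_model {X1,X2} = {[X1 \<mapsto> b, X2 \<mapsto> b] | b. True}"
  by (simp add: PR_model_def)
lemma PR2: "PR_model {X2,X3} = {[X2 \<mapsto> b, X3 \<mapsto> b] | b. True}"
  by (simp add: PR_model_def doubleton_eq_iff)
lemma PR3: "PR_model {X1,X3} = {[X3 \<mapsto> b, X1 \<mapsto> \<not> b] | b. True}"
  by (simp add: PR_model_def doubleton_eq_iff)

definition Rel :: "(obs set \<Rightarrow> sect set) \<Rightarrow> obs \<Rightarrow> obs \<Rightarrow> bool \<Rightarrow> bool \<Rightarrow> bool" where
  "Rel S x y a b \<longleftrightarrow> [x \<mapsto> a, y \<mapsto> b] \<in> S {x,y}"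

lemma sect2: assumes "s \<in> sections_on {x,y}" "x \<noteq> y"
  shows "s = [x \<mapsto> the (s x), y \<mapsto> the (s y)]"
proof (rule ext)
  fix z
  have d: "dom s = {x,y}" using assms(1) by (simp add: sections_on_def)
  show "s z = [x \<mapsto> the (s x), y \<mapsto> the (s y)] z"
  proof (cases "z \<in> {x,y}")
    case True
    then have "s z \<noteq> None" using d by blast
    then show ?thesis using True assms(2) by auto
  next
    case False
    then have "s z = None" using d by blast
    then show ?thesis using False by auto
  qed
qed

lemma S_eq: assumes "poss_model S" "{x,y} \<in> contexts" "x \<noteq> y"
  shows "S {x,y} = {[x \<mapsto> a, y \<mapsto> b] | a b. Rel S x y a b}"
proof
  show "S {x,y} \<subseteq> {[x \<mapsto> a, y \<mapsto> b] | a b. Rel S x y a b}"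
  proof
    fix s assume s: "s \<in> S {x,y}"
    then have "s \<in> sections_on {x,y}" using assms unfolding poss_model_def by blast
    then have "s = [x \<mapsto> the (s x), y \<mapsto> the (s y)]" using sect2 assms(3) by blast
    then show "s \<in> {[x \<mapsto> a, y \<mapsto> b] | a b. Rel S x y a b}"
      using s unfolding Rel_def by (metis (mono_tags, lifting) mem_Collect_eq)
  qed
qed (auto simp: Rel_def)

lemma Rel_sym: "x \<noteq> y \<Longrightarrow> Rel S y x b a \<longleftrightarrow> Rel S x y a b"
  unfolding Rel_def by (metis insert_commute fun_upd_twist)

lemma Rel_ne: assumes "poss_model S" "{x,y} \<in> contexts" "x \<noteq> y"
  shows "\<exists>a b. Rel S x y a b"
proof -
  have "S {x,y} \<noteq> {}" using assms unfolding poss_model_def by blast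
  then show ?thesis using S_eq[OF assms] by blast
qed

lemma restr1: "x \<noteq> y \<Longrightarrow> [x \<mapsto> a, y \<mapsto> b] |` {x} = [x \<mapsto> a]"
  by (rule ext) (auto simp: restrict_map_def)

lemma marg: assumes "poss_model S" "{x,y} \<in> contexts" "{x,z} \<in> contexts" "x \<noteq> y" "x \<noteq> z" "y \<noteq> z"
    and "Rel S x y a b"
  shows "\<exists>c. Rel S x z a c"
proof -
  have int: "{x,y} \<inter> {x,z} = {x}" using assms(4-6) by auto
  have eq: "(\<lambda>s. s |` {x}) ` S {x,y} = (\<lambda>s. s |` {x}) ` S {x,z}"
    using assms(1-3) unfolding poss_model_def by (metis int)
  have "[x \<mapsto> a, y \<mapsto> b] \<in> S {x,y}" using assms(7) by (simp add: Rel_def)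
  then have "[x \<mapsto> a] \<in> (\<lambda>s. s |` {x}) ` S {x,y}" using restr1[OF assms(4)] by (metis image_eqI)
  then have "[x \<mapsto> a] \<in> (\<lambda>s. s |` {x}) ` S {x,z}" using eq by simp
  then obtain t where t: "t \<in> S {x,z}" "[x \<mapsto> a] = t |` {x}" by blast
  then obtain a' c where "t = [x \<mapsto> a', z \<mapsto> c]" "Rel S x z a' c"
    using S_eq[OF assms(1) assms(3) assms(5)] by blast
  moreover then have "a' = a" using t(2) restr1[OF assms(5)] by (metis map_upd_eqD1)
  ultimately show ?thesis by blast
qed

lemma glob: "x \<noteq> y \<Longrightarrow> (Some \<circ> g) |` {x,y} = [x \<mapsto> g x, y \<mapsto> g y]"
  by (rule ext) (auto simp: restrict_map_def)

lemma boolcore: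
  fixes R12 R23 R13 :: "bool \<Rightarrow> bool \<Rightarrow> bool"
  assumes m1: "\<And>a. (\<exists>b. R12 a b) \<longleftrightarrow> (\<exists>c. R13 a c)"
    and m2: "\<And>b. (\<exists>a. R12 a b) \<longleftrightarrow> (\<exists>c. R23 b c)"
    and m3: "\<And>c. (\<exists>b. R23 b c) \<longleftrightarrow> (\<exists>a. R13 a c)"
    and ne: "\<exists>a b. R12 a b"
    and sc: "\<not> (\<exists>a b c. R12 a b \<and> R23 b c \<and> R13 a c)"
  shows "\<exists>p q. (\<forall>a b. R12 a b \<longleftrightarrow> b = (a \<noteq> p)) \<and> (\<forall>b c. R23 b c \<longleftrightarrow> c = (b \<noteq> q))
     \<and> (\<forall>a c. R13 a c \<longleftrightarrow> c = (a \<noteq> (p = q)))"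
proof -
  have m1': "\<And>a. (R12 a True \<or> R12 a False) = (R13 a True \<or> R13 a False)" using m1 by (metis (full_types))
  have m2': "\<And>b. (R12 True b \<or> R12 False b) = (R23 b True \<or> R23 b False)" using m2 by (metis (full_types))
  have m3': "\<And>c. (R23 True c \<or> R23 False c) = (R13 True c \<or> R13 False c)" using m3 by (metis (full_types))
  have ne': "R12 True True \<or> R12 True False \<or> R12 False True \<or> R12 False False" using ne by (metis (full_types))
  have sc': "\<And>a b c. \<not> (R12 a b \<and> R23 b c \<and> R13 a c)" using sc by blast
  show ?thesis
    using m1'[of True] m1'[of False] m2'[of True] m2'[of False] m3'[of True] m3'[of False] ne'
      sc'[of True True True] sc'[of True True False] sc'[of True False True] sc'[of True False False]
      sc'[of False True True] sc'[of False True False] sc'[of False False True] sc'[of False False False]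
    unfolding ex_bool_eq all_bool_eq by smt
qed


lemma relab_pair: "relabel_section id \<tau> [x \<mapsto> a, y \<mapsto> b] = [x \<mapsto> \<tau> x a, y \<mapsto> \<tau> y b]"
  by (rule ext) (auto simp: relabel_section_def inv_id)

lemma relab_id: "relabel id \<tau> S C = relabel_section id \<tau> ` S C"
  by (simp add: relabel_def inv_id)

lemma img_pairs: "relabel_section id \<tau> ` {[x \<mapsto> a, y \<mapsto> b] | a b. R a b}
   = {[x \<mapsto> \<tau> x a, y \<mapsto> \<tau> y b] | a b. R a b}"
  apply (auto simp: image_iff relab_pair)
   apply blast
  by (metis relab_pair)

lemma c12: "{X1,X2} \<in> contexts" and c23: "{X2,X3} \<in> contexts" and c13: "{X1,X3} \<in> contexts"
  by (auto simp: contexts_def)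

lemma h13a: "\<exists>b. [X1 \<mapsto> a, X3 \<mapsto> \<not> a] = [X3 \<mapsto> b, X1 \<mapsto> \<not> b]"
  by (rule_tac x="\<not> a" in exI, rule ext, simp)
lemma h13b: "\<exists>a. [X3 \<mapsto> b, X1 \<mapsto> \<not> b] = [X1 \<mapsto> a, X3 \<mapsto> \<not> a]"
  by (rule_tac x="\<not> b" in exI, rule ext, simp)

lemma backward:
  assumes "is_relabelling \<sigma> \<tau>" "\<forall>C\<in>contexts. relabel \<sigma> \<tau> S C = PR_model C"
  shows "strongly_contextual S"
  unfolding strongly_contextual_def
proof
  assume "\<exists>g. \<forall>C\<in>contexts. (Some \<circ> g) |` C \<in> S C"
  then obtain g where g: "\<forall>C\<in>contexts. (Some \<circ> g) |` C \<in> S C" by blast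
  have bs: "bij \<sigma>" using assms(1) by (simp add: is_relabelling_def)
  then have bi: "bij (inv \<sigma>)" by (rule bij_imp_bij_inv)
  then have ii: "inj (inv \<sigma>)" by (rule bij_is_inj)
  define h where "h y = \<tau> (inv \<sigma> y) (g (inv \<sigma> y))" for y
  have key: "(Some \<circ> h) |` C \<in> PR_model C" if C: "C \<in> contexts" for C
  proof -
    obtain a b where ab: "a \<noteq> b" "C = {a,b}" using C ctx_iff by blast
    have "inv \<sigma> ` C = {inv \<sigma> a, inv \<sigma> b}" using ab by simp
    moreover have "inv \<sigma> a \<noteq> inv \<sigma> b" using ab ii by (meson injD)
    ultimately have "inv \<sigma> ` C \<in> contexts" using ctx_iff by blast
    then have G: "(Some \<circ> g) |` (inv \<sigma> ` C) \<in> S (inv \<sigma> ` C)" using g by blast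
    have "relabel_section \<sigma> \<tau> ((Some \<circ> g) |` (inv \<sigma> ` C)) = (Some \<circ> h) |` C"
    proof (rule ext)
      fix y
      have "inv \<sigma> y \<in> inv \<sigma> ` C \<longleftrightarrow> y \<in> C" using ii by (simp add: inj_image_mem_iff)
      then show "relabel_section \<sigma> \<tau> ((Some \<circ> g) |` (inv \<sigma> ` C)) y = ((Some \<circ> h) |` C) y"
        by (simp add: relabel_section_def restrict_map_def h_def)
    qed
    then have "(Some \<circ> h) |` C \<in> relabel \<sigma> \<tau> S C" using G unfolding relabel_def by (metis image_eqI)
    then show ?thesis using assms(2) C by simp
  qed
  have "h X1 = h X2"
  proof -
    have "[X1 \<mapsto> h X1, X2 \<mapsto> h X2] \<in> PR_model {X1,X2}" using key[OF c12] glob[of X1 X2 h] by simp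
    then obtain b where "[X1 \<mapsto> h X1, X2 \<mapsto> h X2] = [X1 \<mapsto> b, X2 \<mapsto> b]" using PR1 by auto
    then show ?thesis by (metis fun_upd_same fun_upd_other obs.distinct(1) option.inject)
  qed
  moreover have "h X2 = h X3"
  proof -
    have "[X2 \<mapsto> h X2, X3 \<mapsto> h X3] \<in> PR_model {X2,X3}" using key[OF c23] glob[of X2 X3 h] by simp
    then obtain b where "[X2 \<mapsto> h X2, X3 \<mapsto> h X3] = [X2 \<mapsto> b, X3 \<mapsto> b]" using PR2 by auto
    then show ?thesis by (metis fun_upd_same fun_upd_other obs.distinct option.inject)
  qed
  moreover have "h X1 = (\<not> h X3)"
  proof -
    have "[X3 \<mapsto> h X3, X1 \<mapsto> h X1] \<in> PR_model {X1,X3}" using key[OF c13] glob[of X3 X1 h]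
      by (simp add: insert_commute)
    then obtain b where "[X3 \<mapsto> h X3, X1 \<mapsto> h X1] = [X3 \<mapsto> b, X1 \<mapsto> \<not> b]" using PR3 by auto
    then show ?thesis by (metis fun_upd_same fun_upd_other obs.distinct option.inject)
  qed
  ultimately show False by simp
qed

theorem mainTheorem2:
  assumes "poss_model S"
  shows "strongly_contextual S \<longleftrightarrow>
    (\<exists>\<sigma> \<tau>. is_relabelling \<sigma> \<tau> \<and> (\<forall>C\<in>contexts. relabel \<sigma> \<tau> S C = PR_model C))"
proof
  assume sc: "strongly_contextual S"
  define R12 where "R12 = Rel S X1 X2"
  define R23 where "R23 = Rel S X2 X3"
  define R13 where "R13 = Rel S X1 X3"
  have m1: "\<And>a. (\<exists>b. R12 a b) \<longleftrightarrow> (\<exists>c. R13 a c)"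
    unfolding R12_def R13_def using marg[OF assms c12 c13] marg[OF assms c13 c12] by auto
  have m2: "\<And>b. (\<exists>a. R12 a b) \<longleftrightarrow> (\<exists>c. R23 b c)"
  proof -
    fix b
    have e: "{X2,X1} = {X1,X2}" by auto
    have "(\<exists>a. Rel S X2 X1 b a) \<longleftrightarrow> (\<exists>c. R23 b c)"
      unfolding R23_def using marg[OF assms c23[folded e]] marg[OF assms _ c23] c12[folded e]
      by (metis obs.distinct)
    then show "(\<exists>a. R12 a b) \<longleftrightarrow> (\<exists>c. R23 b c)" unfolding R12_def using Rel_sym[of X1 X2] by simp
  qed
  have m3: "\<And>c. (\<exists>b. R23 b c) \<longleftrightarrow> (\<exists>a. R13 a c)"
  proof -
    fix c
    have e1: "{X3,X2} = {X2,X3}" and e2: "{X3,X1} = {X1,X3}" by auto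
    have "(\<exists>b. Rel S X3 X2 c b) \<longleftrightarrow> (\<exists>a. Rel S X3 X1 c a)"
      using marg[OF assms c23[folded e1] c13[folded e2]] marg[OF assms c13[folded e2] c23[folded e1]]
      by (metis obs.distinct)
    then show "(\<exists>b. R23 b c) \<longleftrightarrow> (\<exists>a. R13 a c)" unfolding R23_def R13_def
      using Rel_sym[of X2 X3] Rel_sym[of X1 X3] by simp
  qed
  have ne: "\<exists>a b. R12 a b" unfolding R12_def using Rel_ne[OF assms c12] by simp
  have nsc: "\<not> (\<exists>a b c. R12 a b \<and> R23 b c \<and> R13 a c)"
  proof
    assume "\<exists>a b c. R12 a b \<and> R23 b c \<and> R13 a c"
    then obtain a b c where abc: "R12 a b" "R23 b c" "R13 a c" by blast
    define g where "g = (\<lambda>v. case v of X1 \<Rightarrow> a | X2 \<Rightarrow> b | X3 \<Rightarrow> c)"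
    have "\<forall>C\<in>contexts. (Some \<circ> g) |` C \<in> S C"
      unfolding contexts_def using abc glob[of X1 X2 g] glob[of X2 X3 g] glob[of X1 X3 g]
      by (auto simp: R12_def R23_def R13_def Rel_def g_def)
    then show False using sc unfolding strongly_contextual_def by blast
  qed
  obtain p q where pq: "\<forall>a b. R12 a b \<longleftrightarrow> b = (a \<noteq> p)" "\<forall>b c. R23 b c \<longleftrightarrow> c = (b \<noteq> q)"
     "\<forall>a c. R13 a c \<longleftrightarrow> c = (a \<noteq> (p = q))"
    using boolcore[OF m1 m2 m3 ne nsc] by blast
  define \<tau> where "\<tau> = (\<lambda>v. case v of X1 \<Rightarrow> id | X2 \<Rightarrow> (\<lambda>b. b \<noteq> p) | X3 \<Rightarrow> (\<lambda>c. c \<noteq> (p \<noteq> q)))"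
  have rel: "is_relabelling id \<tau>"
    unfolding is_relabelling_def
  proof (intro conjI allI)
    fix x show "bij (\<tau> x)"
      by (cases x) (auto simp: \<tau>_def bij_def inj_def surj_def)
  qed simp
  have S1: "S {X1,X2} = {[X1 \<mapsto> a, X2 \<mapsto> b] | a b. R12 a b}" unfolding R12_def using S_eq[OF assms c12] by simp
  have S2: "S {X2,X3} = {[X2 \<mapsto> a, X3 \<mapsto> b] | a b. R23 a b}" unfolding R23_def using S_eq[OF assms c23] by simp
  have S3: "S {X1,X3} = {[X1 \<mapsto> a, X3 \<mapsto> b] | a b. R13 a b}" unfolding R13_def using S_eq[OF assms c13] by simp
  have r1: "relabel id \<tau> S {X1,X2} = PR_model {X1,X2}"
    unfolding relab_id S1 img_pairs PR1 using pq(1)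
    by (cases p; cases q) (auto simp: \<tau>_def)
  have r2: "relabel id \<tau> S {X2,X3} = PR_model {X2,X3}"
    unfolding relab_id S2 img_pairs PR2 using pq(2)
    apply (cases p; cases q)
    apply (auto simp: \<tau>_def)
    by (rule_tac x="\<not> b" in exI, simp)+
  have r3: "relabel id \<tau> S {X1,X3} = PR_model {X1,X3}"
    unfolding relab_id S3 img_pairs PR3 using pq(3)
    by (cases p; cases q) (auto simp: \<tau>_def intro: h13a h13b)
  show "\<exists>\<sigma> \<tau>. is_relabelling \<sigma> \<tau> \<and> (\<forall>C\<in>contexts. relabel \<sigma> \<tau> S C = PR_model C)"
    using rel r1 r2 r3 unfolding contexts_def by blast
next
  assume "\<exists>\<sigma> \<tau>. is_relabelling \<sigma> \<tau> \<and> (\<forall>C\<in>contexts. relabel \<sigma> \<tau> S C = PR_model C)"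
  then show "strongly_contextual S" using backward by blast
qed

end
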